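(* Let $E_1,\dots,E_d\subset\{1,\dots,l\}$ and assume that for every transition $j\to k$ of the model the function $V^{jk}$ is strictly increasing. Then, for $0\le t_1<t_2$, the matrix $\mathbf V_{\mathrm{all}}(t_2)-\mathbf V_{\mathrm{all}}(t_1)$ is invertible if and only if the vectors $\Psi_{E_1},\dots,\Psi_{E_d}$ are linearly independent.
   Context: In a Markov multi-state model on states $\{0,\dots,l\}$ with transition intensities $\lambda^{jk}$, a transition of the model is a pair $(j,k)$, $j\neq k$, with $\lambda^{jk}\not\equiv0$; let $w_1,\dots,w_{n_{\mathrm{trans}}}$ enumerate them. A transition $(j,k)$ contributes to $E\subset\{1,\dots,l\}$ if $j\notin E$ and $k\in E$. For $E$ define $\Psi_E=(\psi_{E,m})_{m=1}^{n_{\mathrm{trans}}}\in\{0,1\}^{n_{\mathrm{trans}}}$ with $\psi_{E,m}=1$ iff $w_m$ contributes to $E$. Data setting: $X$ the Markov process with $X(0)=0$, $Z\in\{0,1\}$ treatment group, $C(t)=\tilde C\wedge(t-R)_+$ the censoring time at calendar time $t$ ($R$ entry time, $\tilde C$ dropout time), $X$ independent of $(R,Z,\tilde C)$; $\mu^j(s)=\mathbb E[Z\mathbb 1\{X(s-)=j\}\mathbb 1\{s\le C(t)\}]/\mathbb E[\mathbb 1\{X(s-)=j\}\mathbb 1\{s\le C(t)\}]$, assumed not to depend on $t$; $q^{jk}(s)$ deterministic weight functions. Define $V^{jk}(t)=\int_{[0,t]}q^{jk}(s)^2\lambda^{jk}(s)\mathbb E[\mathbb 1\{X(s)=j\}\mathbb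 1\{s\le C(t)\}(Z-\mu^j(s))^2]ds$ and the $d\times d$ matrix $\mathbf V_{\mathrm{all}}(t)$ with entries $V_{\mathrm{all},c_1c_2}(t)=\sum_{k\in E_{c_1}\cap E_{c_2}}\sum_{j\notin E_{c_1}\cup E_{c_2}}V^{jk}(t)$ (sum over transitions of the model). *)

theory Defs
  imports "HOL-Analysis.Analysis" "Jordan_Normal_Form.Matrix"
begin

definition transitions :: "nat \<Rightarrow> (nat \<Rightarrow> nat \<Rightarrow> real \<Rightarrow> real) \<Rightarrow> (nat \<times> nat) set" where
  "transitions l lam = {(j,k). j \<le> l \<and> k \<le> l \<and> j \<noteq> k \<and> (\<exists>s\<ge>0. lam j k s \<noteq> 0)}"

definition contributes :: "nat \<times> nat \<Rightarrow> nat set \<Rightarrow> bool" where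
  "contributes w E \<longleftrightarrow> fst w \<notin> E \<and> snd w \<in> E"

text \<open>Psi_E with respect to an enumeration w_0,...,w_{n-1} of the transitions.\<close>
definition Psi :: "nat \<Rightarrow> (nat \<Rightarrow> nat \<times> nat) \<Rightarrow> nat set \<Rightarrow> real vec" where
  "Psi n w E = vec n (\<lambda>m. if contributes (w m) E then 1 else 0)"

definition lin_indep_family :: "nat \<Rightarrow> nat \<Rightarrow> (nat \<Rightarrow> real vec) \<Rightarrow> bool" where
  "lin_indep_family n d v \<longleftrightarrow>
     (\<forall>a :: nat \<Rightarrow> real. finsum_vec TYPE(real) n (\<lambda>c. a c \<cdot>\<^sub>v v c) {..<d} = 0\<^sub>v n
        \<longrightarrow> (\<forall>c<d. a c = 0))"

definition V_all :: "nat \<Rightarrow> (nat \<Rightarrow> nat \<Rightarrow> real \<Rightarrow> real) \<Rightarrow> (nat \<Rightarrow> nat \<Rightarrow> real \<Rightarrow> real)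
    \<Rightarrow> nat \<Rightarrow> (nat \<Rightarrow> nat set) \<Rightarrow> real \<Rightarrow> real mat" where
  "V_all l lam V d E t = mat d d (\<lambda>(c1, c2).
     \<Sum>(j,k)\<in>{(j,k)\<in>transitions l lam. k \<in> E c1 \<inter> E c2 \<and> j \<notin> E c1 \<union> E c2}. V j k t)"

end

theory Submission
  imports Defs "Jordan_Normal_Form.Determinant"
begin

lemma inv_iff_inj:
  fixes D :: "real mat" assumes D: "D \<in> carrier_mat d d"
  shows "invertible_mat D \<longleftrightarrow> (\<forall>v\<in>carrier_vec d. D *\<^sub>v v = 0\<^sub>v d \<longrightarrow> v = 0\<^sub>v d)"
proof
  assume "invertible_mat D"
  then obtain B where DB: "D * B = 1\<^sub>m d" and BD: "B * D = 1\<^sub>m (dim_row B)"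
    unfolding invertible_mat_def inverts_mat_def using D by auto
  have "dim_col B = d" using arg_cong[OF DB, of dim_col] by simp
  moreover have "dim_row B = d" using arg_cong[OF BD, of dim_col] D by simp
  ultimately have B: "B \<in> carrier_mat d d" by auto
  show "\<forall>v\<in>carrier_vec d. D *\<^sub>v v = 0\<^sub>v d \<longrightarrow> v = 0\<^sub>v d"
  proof (intro ballI impI)
    fix v :: "real vec" assume v: "v \<in> carrier_vec d" and Dv: "D *\<^sub>v v = 0\<^sub>v d"
    have "v = 1\<^sub>m d *\<^sub>v v" using v by simp
    also have "\<dots> = (B * D) *\<^sub>v v" using BD \<open>dim_row B = d\<close> by simp
    also have "\<dots> = B *\<^sub>v (D *\<^sub>v v)" using B D v by simp
    also have "\<dots> = 0\<^sub>v d" using Dv B by (intro eq_vecI) (auto simp: scalar_prod_def)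
    finally show "v = 0\<^sub>v d" .
  qed
next
  assume H: "\<forall>v\<in>carrier_vec d. D *\<^sub>v v = 0\<^sub>v d \<longrightarrow> v = 0\<^sub>v d"
  have "det D \<noteq> 0" using det_0_iff_vec_prod_zero[OF D] H by blast
  from det_non_zero_imp_unit[OF D this, of undefined]
  obtain B where B: "B \<in> carrier_mat d d" and BD: "B * D = 1\<^sub>m d" and DB: "D * B = 1\<^sub>m d"
    unfolding Units_def ring_mat_def by auto
  show "invertible_mat D" unfolding invertible_mat_def inverts_mat_def
    using B BD DB D by auto
qed

theorem lemma3:
  fixes l d n :: nat
    and lam :: "nat \<Rightarrow> nat \<Rightarrow> real \<Rightarrow> real"
    and V :: "nat \<Rightarrow> nat \<Rightarrow> real \<Rightarrow> real"
    and E :: "nat \<Rightarrow> nat set"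
    and w :: "nat \<Rightarrow> nat \<times> nat"
    and t1 t2 :: real
  assumes enum: "bij_betw w {..<n} (transitions l lam)"
    and E_sub: "\<forall>c<d. E c \<subseteq> {1..l}"
    and V_incr: "\<forall>(j,k)\<in>transitions l lam. strict_mono_on {0..} (V j k)"
    and t1: "0 \<le> t1" and t12: "t1 < t2"
  shows "invertible_mat (V_all l lam V d E t2 - V_all l lam V d E t1)
           \<longleftrightarrow> lin_indep_family n d (\<lambda>c. Psi n w (E c))"
proof -
  define T where "T = transitions l lam"
  define psi :: "nat \<Rightarrow> nat \<Rightarrow> real" where
    "psi m c = (if contributes (w m) (E c) then 1 else 0)" for m c
  define Dl :: "nat \<Rightarrow> real" where
    "Dl m = V (fst (w m)) (snd (w m)) t2 - V (fst (w m)) (snd (w m)) t1" for m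
  define D where "D = V_all l lam V d E t2 - V_all l lam V d E t1"
  have D: "D \<in> carrier_mat d d" unfolding D_def V_all_def by auto
  have Dpos: "Dl m > 0" if "m < n" for m
  proof -
    have "w m \<in> T" using enum that unfolding T_def bij_betw_def by auto
    then have "strict_mono_on {0..} (V (fst (w m)) (snd (w m)))"
      using V_incr unfolding T_def by auto
    then show ?thesis unfolding Dl_def using t1 t12
      by (simp add: strict_mono_on_def)
  qed
  have Dentry: "D $$ (i,j) = (\<Sum>m<n. Dl m * psi m i * psi m j)" if "i < d" "j < d" for i j
  proof -
    let ?c = "\<lambda>p::nat\<times>nat. snd p \<in> E i \<inter> E j \<and> fst p \<notin> E i \<union> E j"
    let ?f = "\<lambda>p::nat\<times>nat. V (fst p) (snd p) t2 - V (fst p) (snd p) t1"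
    have fin: "finite T" using enum unfolding T_def bij_betw_def by (metis finite_imageI finite_lessThan)
    have "D $$ (i,j) = (\<Sum>p\<in>{p\<in>T. ?c p}. V (fst p) (snd p) t2) - (\<Sum>p\<in>{p\<in>T. ?c p}. V (fst p) (snd p) t1)"
    proof -
      have S: "{(ja,k). (ja,k) \<in> transitions l lam \<and> k \<in> E i \<and> k \<in> E j \<and> ja \<notin> E i \<and> ja \<notin> E j} = {p\<in>T. ?c p}"
        by (auto simp: T_def)
      show ?thesis
      unfolding D_def V_all_def using that S by (simp add: case_prod_beta)
    qed
    also have "\<dots> = (\<Sum>p\<in>{p\<in>T. ?c p}. ?f p)" by (simp add: sum_subtractf)
    also have "\<dots> = (\<Sum>p\<in>T. if ?c p then ?f p else 0)"
      using fin by (simp add: sum.inter_filter)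
    also have "\<dots> = (\<Sum>m<n. if ?c (w m) then ?f (w m) else 0)"
      using sum.reindex_bij_betw[OF enum[folded T_def], of "\<lambda>p. if ?c p then ?f p else 0"] by simp
    also have "\<dots> = (\<Sum>m<n. Dl m * psi m i * psi m j)"
      by (rule sum.cong) (auto simp: Dl_def psi_def contributes_def)
    finally show ?thesis .
  qed
  define u where "u v m = (\<Sum>c<d. v $ c * psi m c)" for v :: "real vec" and m
  have Dv: "(D *\<^sub>v v) $ i = (\<Sum>m<n. Dl m * psi m i * u v m)"
    if v: "v \<in> carrier_vec d" and i: "i < d" for v i
  proof -
    have "(D *\<^sub>v v) $ i = (\<Sum>j<d. D $$ (i,j) * v $ j)"
      using D v i by (simp add: scalar_prod_def row_def lessThan_atLeast0)
    also have "\<dots> = (\<Sum>j<d. \<Sum>m<n. Dl m * psi m i * psi m j * v $ j)"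
      using Dentry i by (simp add: sum_distrib_right)
    also have "\<dots> = (\<Sum>m<n. \<Sum>j<d. Dl m * psi m i * (v $ j * psi m j))"
      by (subst sum.swap) (simp add: algebra_simps)
    also have "\<dots> = (\<Sum>m<n. Dl m * psi m i * u v m)"
      by (simp add: u_def sum_distrib_left)
    finally show ?thesis .
  qed
  have key: "D *\<^sub>v v = 0\<^sub>v d \<longleftrightarrow> (\<forall>m<n. u v m = 0)" if v: "v \<in> carrier_vec d" for v
  proof
    assume H: "D *\<^sub>v v = 0\<^sub>v d"
    have "0 = (\<Sum>i<d. v $ i * (D *\<^sub>v v) $ i)" using H by simp
    also have "\<dots> = (\<Sum>i<d. \<Sum>m<n. v $ i * (Dl m * psi m i * u v m))"
      using Dv[OF v] by (simp add: sum_distrib_left)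
    also have "\<dots> = (\<Sum>m<n. Dl m * (u v m)^2)"
      by (subst sum.swap) (simp add: u_def power2_eq_square sum_distrib_left sum_distrib_right algebra_simps)
    finally have "(\<Sum>m<n. Dl m * (u v m)^2) = 0" by simp
    then have "\<forall>m\<in>{..<n}. Dl m * (u v m)^2 = 0"
      by (subst (asm) sum_nonneg_eq_0_iff) (auto simp: less_imp_le[OF Dpos])
    then show "\<forall>m<n. u v m = 0" using Dpos by (metis lessThan_iff less_irrefl mult_eq_0_iff power_eq_0_iff)
  next
    assume "\<forall>m<n. u v m = 0"
    then show "D *\<^sub>v v = 0\<^sub>v d" using D v Dv by (intro eq_vecI) auto
  qed
  have lin: "lin_indep_family n d (\<lambda>c. Psi n w (E c)) \<longleftrightarrow>
     (\<forall>a. (\<forall>m<n. (\<Sum>c<d. a c * psi m c) = 0) \<longrightarrow> (\<forall>c<d. a c = 0))"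
  proof -
    have "finsum_vec TYPE(real) n (\<lambda>c. a c \<cdot>\<^sub>v Psi n w (E c)) {..<d} = 0\<^sub>v n \<longleftrightarrow>
          (\<forall>m<n. (\<Sum>c<d. a c * psi m c) = 0)" for a
    proof -
      have cl: "(\<lambda>c. a c \<cdot>\<^sub>v Psi n w (E c)) \<in> {..<d} \<rightarrow> carrier_vec n"
        by (auto simp: Psi_def)
      have dim: "finsum_vec TYPE(real) n (\<lambda>c. a c \<cdot>\<^sub>v Psi n w (E c)) {..<d} \<in> carrier_vec n"
        using finsum_vec_closed[OF cl] .
      show ?thesis
        using dim index_finsum_vec[OF _ _ cl]
        by (auto simp: vec_eq_iff Psi_def psi_def)
    qed
    then show ?thesis unfolding lin_indep_family_def by simp
  qed
  have "invertible_mat D \<longleftrightarrow> (\<forall>v\<in>carrier_vec d. (\<forall>m<n. u v m = 0) \<longrightarrow> v = 0\<^sub>v d)"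
    using inv_iff_inj[OF D] key by auto
  also have "\<dots> \<longleftrightarrow> (\<forall>a. (\<forall>m<n. (\<Sum>c<d. a c * psi m c) = 0) \<longrightarrow> (\<forall>c<d. a c = 0))"
  proof
    assume H: "\<forall>v\<in>carrier_vec d. (\<forall>m<n. u v m = 0) \<longrightarrow> v = 0\<^sub>v d"
    show "\<forall>a. (\<forall>m<n. (\<Sum>c<d. a c * psi m c) = 0) \<longrightarrow> (\<forall>c<d. a c = 0)"
    proof (intro allI impI)
      fix a c assume A: "\<forall>m<n. (\<Sum>c<d. a c * psi m c) = 0" and c: "c < d"
      have "u (vec d a) m = (\<Sum>c<d. a c * psi m c)" for m
        unfolding u_def by (rule sum.cong) auto
      then have "vec d a = 0\<^sub>v d" using H A by auto
      then show "a c = 0" using c by (metis index_vec index_zero_vec(1))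
    qed
  next
    assume H: "\<forall>a. (\<forall>m<n. (\<Sum>c<d. a c * psi m c) = 0) \<longrightarrow> (\<forall>c<d. a c = 0)"
    show "\<forall>v\<in>carrier_vec d. (\<forall>m<n. u v m = 0) \<longrightarrow> v = 0\<^sub>v d"
    proof (intro ballI impI)
      fix v :: "real vec" assume v: "v \<in> carrier_vec d" and U: "\<forall>m<n. u v m = 0"
      have "\<forall>c<d. v $ c = 0" using H[rule_format, of "\<lambda>c. v $ c"] U unfolding u_def by blast
      then show "v = 0\<^sub>v d" using v by (intro eq_vecI) auto
    qed
  qed
  finally show ?thesis using lin D_def by simp
qed

end
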